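(* Let $G$ be a finite group. There exists a (non-unique) map of operads $\mathcal{SM}_{\varnothing}\to\varepsilon^*\mathscr{P}$, and any such map is a levelwise $(G\times\Sigma_\bullet)$-equivalence: for every $n$ and every subgroup $\Lambda\subseteq G\times\Sigma_n$, the induced functor on $\Lambda$-fixed subcategories is an equivalence of categories.
   Context: For a set $X$, $\widetilde X$ is the chaotic category on $X$ (exactly one morphism between any two objects), applied levelwise to operads. $\mathcal{SM}_\varnothing=\widetilde{\mathbb{F}(S)}$ where $\mathbb{F}$ is the free operad functor on symmetric sequences of $G$-sets and $S=(G\times\Sigma_0)/(G\times1)\sqcup(G\times\Sigma_2)/(G\times1)$ (this is the operad $\mathcal{SM}_{\mathbf{O}(\underline{\mathrm{triv}})}$ associated to the minimal indexing system, which has no nontrivial orbits). $\mathscr{P}=\widetilde{\Sigma_\bullet}$ is the nonequivariant permutativity (Barratt–Eccles) operad, the chaotification of the associative operad $\Sigma_\bullet$ with $\Sigma_n$ acting by left multiplication, and $\varepsilon^*\mathscr{P}$ is $\mathscr{P}$ with trivial $G$-action. *)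

theory Defs
  imports "HOL-Algebra.Sym_Groups"
begin

record ('o, 'm) category =
  Obj :: "'o set"
  Arr :: "'m set"
  Dom :: "'m \<Rightarrow> 'o"
  Cod :: "'m \<Rightarrow> 'o"
  Idm :: "'o \<Rightarrow> 'm"
  Cmp :: "'m \<Rightarrow> 'm \<Rightarrow> 'm"   (* Cmp C g f = g after f *)

record ('o, 'm, 'p, 'n) cfunctor =
  fo :: "'o \<Rightarrow> 'p"
  fm :: "'m \<Rightarrow> 'n"

definition is_functor :: "('o,'m) category \<Rightarrow> ('p,'n) category \<Rightarrow> ('o,'m,'p,'n) cfunctor \<Rightarrow> bool" where
  "is_functor C D F \<longleftrightarrow>
     (\<forall>x\<in>Obj C. fo F x \<in> Obj D) \<and>
     (\<forall>f\<in>Arr C. fm F f \<in> Arr D \<and> Dom D (fm F f) = fo F (Dom C f) \<and> Cod D (fm F f) = fo F (Cod C f)) \<and>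
     (\<forall>x\<in>Obj C. fm F (Idm C x) = Idm D (fo F x)) \<and>
     (\<forall>f\<in>Arr C. \<forall>g\<in>Arr C. Dom C g = Cod C f \<longrightarrow> fm F (Cmp C g f) = Cmp D (fm F g) (fm F f))"

definition id_functor :: "('o,'m,'o,'m) cfunctor" where
  "id_functor = \<lparr>fo = id, fm = id\<rparr>"

definition comp_functor :: "('p,'n,'q,'l) cfunctor \<Rightarrow> ('o,'m,'p,'n) cfunctor \<Rightarrow> ('o,'m,'q,'l) cfunctor" where
  "comp_functor H F = \<lparr>fo = fo H \<circ> fo F, fm = fm H \<circ> fm F\<rparr>"

definition iso_arr :: "('o,'m) category \<Rightarrow> 'm \<Rightarrow> bool" where
  "iso_arr C f \<longleftrightarrow> f \<in> Arr C \<and>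
     (\<exists>g\<in>Arr C. Dom C g = Cod C f \<and> Cod C g = Dom C f \<and>
        Cmp C g f = Idm C (Dom C f) \<and> Cmp C f g = Idm C (Cod C f))"

definition nat_iso :: "('o,'m) category \<Rightarrow> ('p,'n) category \<Rightarrow> ('o,'m,'p,'n) cfunctor
    \<Rightarrow> ('o,'m,'p,'n) cfunctor \<Rightarrow> ('o \<Rightarrow> 'n) \<Rightarrow> bool" where
  "nat_iso C D F1 F2 \<eta> \<longleftrightarrow>
     (\<forall>x\<in>Obj C. iso_arr D (\<eta> x) \<and> Dom D (\<eta> x) = fo F1 x \<and> Cod D (\<eta> x) = fo F2 x) \<and>
     (\<forall>f\<in>Arr C. Cmp D (\<eta> (Cod C f)) (fm F1 f) = Cmp D (fm F2 f) (\<eta> (Dom C f)))"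

definition cat_equiv :: "('o,'m) category \<Rightarrow> ('p,'n) category \<Rightarrow> ('o,'m,'p,'n) cfunctor \<Rightarrow> bool" where
  "cat_equiv C D F \<longleftrightarrow> is_functor C D F \<and>
     (\<exists>H \<eta> \<epsilon>. is_functor D C H \<and>
        nat_iso C C id_functor (comp_functor H F) \<eta> \<and>
        nat_iso D D (comp_functor F H) id_functor \<epsilon>)"

definition fixed_subcat :: "('o,'m) category \<Rightarrow> ('a \<Rightarrow> ('o,'m,'o,'m) cfunctor) \<Rightarrow> 'a set \<Rightarrow> ('o,'m) category" where
  "fixed_subcat C act L = C\<lparr> Obj := {x\<in>Obj C. \<forall>l\<in>L. fo (act l) x = x},
                            Arr := {f\<in>Arr C. \<forall>l\<in>L. fm (act l) f = f} \<rparr>"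

definition chaotic :: "'o set \<Rightarrow> ('o, 'o \<times> 'o) category" where
  "chaotic X = \<lparr>Obj = X, Arr = X \<times> X, Dom = fst, Cod = snd,
                Idm = (\<lambda>x. (x, x)), Cmp = (\<lambda>g f. (fst f, snd g))\<rparr>"

definition chaotic_fun :: "('o \<Rightarrow> 'p) \<Rightarrow> ('o, 'o \<times> 'o, 'p, 'p \<times> 'p) cfunctor" where
  "chaotic_fun h = \<lparr>fo = h, fm = map_prod h h\<rparr>"

(* Lev n = the category O(n); Act n l = action of l in G x Sigma_n;
   Gam_o / Gam_m = operadic composition gamma on objects / morphisms; Unit = unit object *)
record ('a, 'o, 'm) cat_operad =
  Lev :: "nat \<Rightarrow> ('o,'m) category"
  Act :: "nat \<Rightarrow> 'a \<Rightarrow> ('o,'m,'o,'m) cfunctor"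
  Gam_o :: "'o \<Rightarrow> 'o list \<Rightarrow> 'o"
  Gam_m :: "'m \<Rightarrow> 'm list \<Rightarrow> 'm"
  Unit :: "'o"

definition operad_map :: "('g,'b) monoid_scheme
    \<Rightarrow> ('g \<times> (nat \<Rightarrow> nat), 'o, 'm) cat_operad \<Rightarrow> ('g \<times> (nat \<Rightarrow> nat), 'p, 'n) cat_operad
    \<Rightarrow> (nat \<Rightarrow> ('o,'m,'p,'n) cfunctor) \<Rightarrow> bool" where
  "operad_map G Op Qp F \<longleftrightarrow>
     (\<forall>n. is_functor (Lev Op n) (Lev Qp n) (F n)) \<and>
     (\<forall>n. \<forall>l\<in>carrier (G \<times>\<times> sym_group n).
        (\<forall>x\<in>Obj (Lev Op n). fo (F n) (fo (Act Op n l) x) = fo (Act Qp n l) (fo (F n) x)) \<and>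
        (\<forall>f\<in>Arr (Lev Op n). fm (F n) (fm (Act Op n l) f) = fm (Act Qp n l) (fm (F n) f))) \<and>
     (\<forall>k js x xs. length js = k \<and> length xs = k \<and> x \<in> Obj (Lev Op k) \<and>
        (\<forall>i<k. xs ! i \<in> Obj (Lev Op (js ! i))) \<longrightarrow>
        fo (F (sum_list js)) (Gam_o Op x xs) = Gam_o Qp (fo (F k) x) (map2 (\<lambda>j y. fo (F j) y) js xs)) \<and>
     (\<forall>k js f fs. length js = k \<and> length fs = k \<and> f \<in> Arr (Lev Op k) \<and>
        (\<forall>i<k. fs ! i \<in> Arr (Lev Op (js ! i))) \<longrightarrow>
        fm (F (sum_list js)) (Gam_m Op f fs) = Gam_m Qp (fm (F k) f) (map2 (\<lambda>j g. fm (F j) g) js fs)) \<and>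
     fo (F 1) (Unit Op) = Unit Qp"

definition chaotic_operad :: "(nat \<Rightarrow> 'o set) \<Rightarrow> (nat \<Rightarrow> 'a \<Rightarrow> 'o \<Rightarrow> 'o)
    \<Rightarrow> ('o \<Rightarrow> 'o list \<Rightarrow> 'o) \<Rightarrow> 'o \<Rightarrow> ('a, 'o, 'o \<times> 'o) cat_operad" where
  "chaotic_operad A act gam u =
     \<lparr>Lev = (\<lambda>n. chaotic (A n)), Act = (\<lambda>n l. chaotic_fun (act n l)), Gam_o = gam,
      Gam_m = (\<lambda>f fs. (gam (fst f) (map fst fs), gam (snd f) (map snd fs))), Unit = u\<rparr>"

section \<open>The free operad F(S): trees with one nullary and one (Sigma_2-free) binary generator\<close>

datatype tr = Lf nat | Nul | Bin tr tr

fun leaves :: "tr \<Rightarrow> nat list" where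
  "leaves (Lf i) = [i]" | "leaves Nul = []" | "leaves (Bin a b) = leaves a @ leaves b"

fun relabel :: "(nat \<Rightarrow> nat) \<Rightarrow> tr \<Rightarrow> tr" where
  "relabel s (Lf i) = Lf (s i)" | "relabel s Nul = Nul" | "relabel s (Bin a b) = Bin (relabel s a) (relabel s b)"

fun subst_tr :: "(nat \<Rightarrow> tr) \<Rightarrow> tr \<Rightarrow> tr" where
  "subst_tr f (Lf i) = f i" | "subst_tr f Nul = Nul" | "subst_tr f (Bin a b) = Bin (subst_tr f a) (subst_tr f b)"

definition free_ar :: "nat \<Rightarrow> tr set" where
  "free_ar n = {t. distinct (leaves t) \<and> set (leaves t) = {1..n}}"

definition tr_off :: "tr list \<Rightarrow> nat \<Rightarrow> nat" where
  "tr_off ss i = sum_list (map (\<lambda>s. length (leaves s)) (take (i - 1) ss))"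

definition tr_gamma :: "tr \<Rightarrow> tr list \<Rightarrow> tr" where
  "tr_gamma t ss = subst_tr (\<lambda>i. relabel (\<lambda>r. tr_off ss i + r) (ss ! (i - 1))) t"

definition SM_empty :: "('g \<times> (nat \<Rightarrow> nat), tr, tr \<times> tr) cat_operad" where
  "SM_empty = chaotic_operad free_ar (\<lambda>n (g, \<sigma>). relabel \<sigma>) tr_gamma (Lf 1)"

(* Sigma_n represented by words w = [tau 1, ..., tau n]; the left multiplication sigma.tau is map sigma w *)
definition perm_ar :: "nat \<Rightarrow> nat list set" where
  "perm_ar n = {w. distinct w \<and> set w = {1..n}}"

definition w_off :: "nat list list \<Rightarrow> nat \<Rightarrow> nat" where
  "w_off ws i = sum_list (map length (take (i - 1) ws))"

(* associative operad composition: replace letter i of w by the shifted word w_i *)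
definition w_gamma :: "nat list \<Rightarrow> nat list list \<Rightarrow> nat list" where
  "w_gamma w ws = concat (map (\<lambda>i. map (\<lambda>r. w_off ws i + r) (ws ! (i - 1))) w)"

definition eps_P :: "('g \<times> (nat \<Rightarrow> nat), nat list, nat list \<times> nat list) cat_operad" where
  "eps_P = chaotic_operad perm_ar (\<lambda>n (g, \<sigma>). map \<sigma>) w_gamma [1]"

end

theory Submission
  imports Defs
begin

lemma leaves_relabel: "leaves (relabel s t) = map s (leaves t)"
  by (induction t) auto

lemma relabel_id: "relabel id t = t"
  by (induction t) auto

lemma leaves_subst: "leaves (subst_tr f t) = concat (map (\<lambda>i. leaves (f i)) (leaves t))"
  by (induction t) auto

lemma off_eq: "tr_off ss i = w_off (map leaves ss) i"
  unfolding tr_off_def w_off_def by (simp add: take_map comp_def)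

lemma off_eq_rev: "tr_off ss i = w_off (map (\<lambda>s. rev (leaves s)) ss) i"
  unfolding tr_off_def w_off_def by (simp add: take_map comp_def)

lemma leaves_gamma:
  assumes "set (leaves t) \<subseteq> {1..length ss}"
  shows "leaves (tr_gamma t ss) = w_gamma (leaves t) (map leaves ss)"
proof -
  have "leaves (tr_gamma t ss) = concat (map (\<lambda>i. map (\<lambda>r. tr_off ss i + r) (leaves (ss ! (i - 1)))) (leaves t))"
    unfolding tr_gamma_def by (simp add: leaves_subst leaves_relabel)
  also have "\<dots> = w_gamma (leaves t) (map leaves ss)"
    unfolding w_gamma_def
  proof (rule arg_cong[where f=concat], rule map_cong[OF refl])
    fix i assume "i \<in> set (leaves t)"
    with assms have "i \<in> {1..length ss}" by blast
    then have "i - 1 < length ss" by auto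
    then show "map (\<lambda>r. tr_off ss i + r) (leaves (ss ! (i - 1))) =
          map (\<lambda>r. w_off (map leaves ss) i + r) (map leaves ss ! (i - 1))"
      by (simp add: off_eq)
  qed
  finally show ?thesis .
qed

lemma rev_concat_map: "rev (concat (map f xs)) = concat (map (\<lambda>x. rev (f x)) (rev xs))"
  by (induction xs) auto

lemma rleaves_gamma:
  assumes "set (leaves t) \<subseteq> {1..length ss}"
  shows "rev (leaves (tr_gamma t ss)) = w_gamma (rev (leaves t)) (map (\<lambda>s. rev (leaves s)) ss)"
proof -
  have "rev (leaves (tr_gamma t ss)) = concat (map (\<lambda>i. rev (map (\<lambda>r. tr_off ss i + r) (leaves (ss ! (i - 1))))) (rev (leaves t)))"
    unfolding tr_gamma_def by (simp add: leaves_subst leaves_relabel rev_concat_map)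
  also have "\<dots> = w_gamma (rev (leaves t)) (map (\<lambda>s. rev (leaves s)) ss)"
    unfolding w_gamma_def
  proof (rule arg_cong[where f=concat], rule map_cong[OF refl])
    fix i assume "i \<in> set (rev (leaves t))"
    with assms have "i \<in> {1..length ss}" by auto
    then have "i - 1 < length ss" by auto
    then show "rev (map (\<lambda>r. tr_off ss i + r) (leaves (ss ! (i - 1)))) =
          map (\<lambda>r. w_off (map (\<lambda>s. rev (leaves s)) ss) i + r) (map (\<lambda>s. rev (leaves s)) ss ! (i - 1))"
      by (simp add: off_eq_rev rev_map)
  qed
  finally show ?thesis .
qed

lemma Lev_SM: "Lev SM_empty n = chaotic (free_ar n)"
  by (simp add: SM_empty_def chaotic_operad_def)
lemma Act_SM: "Act SM_empty n = (\<lambda>l. chaotic_fun (case l of (g, \<sigma>) \<Rightarrow> relabel \<sigma>))"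
  by (simp add: SM_empty_def chaotic_operad_def)
lemma Lev_P: "Lev eps_P n = chaotic (perm_ar n)"
  by (simp add: eps_P_def chaotic_operad_def)
lemma Act_P: "Act eps_P n = (\<lambda>l. chaotic_fun (case l of (g, \<sigma>) \<Rightarrow> map \<sigma>))"
  by (simp add: eps_P_def chaotic_operad_def)
lemma Gam_SM: "Gam_o SM_empty = tr_gamma"
  "Gam_m SM_empty = (\<lambda>f fs. (tr_gamma (fst f) (map fst fs), tr_gamma (snd f) (map snd fs)))"
  "Unit SM_empty = Lf 1"
  by (simp_all add: SM_empty_def chaotic_operad_def)
lemma Gam_P: "Gam_o eps_P = w_gamma"
  "Gam_m eps_P = (\<lambda>f fs. (w_gamma (fst f) (map fst fs), w_gamma (snd f) (map snd fs)))"
  "Unit eps_P = [1]"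
  by (simp_all add: eps_P_def chaotic_operad_def)

lemma map2_const: "length js = length xs \<Longrightarrow> map2 (\<lambda>j y. h y) js xs = map h xs"
  by (induction js xs rule: list_induct2) auto

lemma map2_prod: "length js = length xs \<Longrightarrow>
   map fst (map2 (\<lambda>j y. map_prod h h y) js xs) = map h (map fst xs) \<and>
   map snd (map2 (\<lambda>j y. map_prod h h y) js xs) = map h (map snd xs)"
  by (induction js xs rule: list_induct2) auto

lemma map_prod_map2: "length js = length xs \<Longrightarrow>
   map2 (\<lambda>j y. fm (chaotic_fun h) y) js xs = map2 (\<lambda>j y. map_prod h h y) js xs"
  by (simp add: chaotic_fun_def)

lemma opmap_generic:
  assumes obj: "\<And>n t. t \<in> free_ar n \<Longrightarrow> L t \<in> perm_ar n"
    and eqv: "\<And>\<sigma> t. L (relabel \<sigma> t) = map \<sigma> (L t)"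
    and gam: "\<And>t ss. set (leaves t) \<subseteq> {1..length ss} \<Longrightarrow> L (tr_gamma t ss) = w_gamma (L t) (map L ss)"
    and un: "L (Lf 1) = [1]"
  shows "operad_map G SM_empty eps_P (\<lambda>n. chaotic_fun L)"
  unfolding operad_map_def
proof (intro conjI allI ballI impI)
  fix n show "is_functor (Lev SM_empty n) (Lev eps_P n) (chaotic_fun L)"
    unfolding Lev_SM Lev_P is_functor_def chaotic_def chaotic_fun_def using obj by auto
next
  fix n l x assume "x \<in> Obj (Lev SM_empty n)"
  show "fo (chaotic_fun L) (fo (Act SM_empty n l) x) = fo (Act eps_P n l) (fo (chaotic_fun L) x)"
    unfolding Act_SM Act_P by (cases l) (simp add: chaotic_fun_def eqv)
next
  fix n l f assume "f \<in> Arr (Lev SM_empty n)"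
  show "fm (chaotic_fun L) (fm (Act SM_empty n l) f) = fm (Act eps_P n l) (fm (chaotic_fun L) f)"
    unfolding Act_SM Act_P by (cases l, cases f) (simp add: chaotic_fun_def eqv)
next
  fix k js x xs
  assume h: "length js = k \<and> length xs = k \<and> x \<in> Obj (Lev SM_empty k) \<and> (\<forall>i<k. xs ! i \<in> Obj (Lev SM_empty (js ! i)))"
  then have "set (leaves x) \<subseteq> {1..length xs}" by (simp add: Lev_SM chaotic_def free_ar_def)
  then show "fo (chaotic_fun L) (Gam_o SM_empty x xs) =
         Gam_o eps_P (fo (chaotic_fun L) x) (map2 (\<lambda>j y. fo (chaotic_fun L) y) js xs)"
    using h by (simp add: Gam_SM Gam_P chaotic_fun_def gam map2_const)
next
  fix k js f fs
  assume h: "length js = k \<and> length fs = k \<and> f \<in> Arr (Lev SM_empty k) \<and> (\<forall>i<k. fs ! i \<in> Arr (Lev SM_empty (js ! i)))"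
  then have "set (leaves (fst f)) \<subseteq> {1..length (map fst fs)}" "set (leaves (snd f)) \<subseteq> {1..length (map snd fs)}"
    by (auto simp add: Lev_SM chaotic_def free_ar_def)
  then show "fm (chaotic_fun L) (Gam_m SM_empty f fs) =
         Gam_m eps_P (fm (chaotic_fun L) f) (map2 (\<lambda>j g. fm (chaotic_fun L) g) js fs)"
    using h map2_prod[of js fs L] by (simp add: Gam_SM Gam_P chaotic_fun_def gam)
next
  show "fo (chaotic_fun L) (Unit SM_empty) = Unit eps_P"
    using un by (simp add: Gam_SM Gam_P chaotic_fun_def)
qed


lemma fixed_chaotic:
  "fixed_subcat (chaotic X) (\<lambda>l. chaotic_fun (a l)) L = chaotic {x\<in>X. \<forall>l\<in>L. a l x = x}"
  unfolding fixed_subcat_def chaotic_def chaotic_fun_def by auto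

lemma chaotic_equiv:
  assumes F: "is_functor (chaotic X) (chaotic Y) F" and ne: "Y \<noteq> {} \<Longrightarrow> X \<noteq> {}"
  shows "cat_equiv (chaotic X) (chaotic Y) F"
proof (cases "X = {}")
  case True
  then have Y: "Y = {}" using ne by blast
  let ?H = "\<lparr>fo = (\<lambda>y. undefined), fm = (\<lambda>f. undefined)\<rparr> :: ('b, 'b\<times>'b, 'a, 'a\<times>'a) cfunctor"
  show ?thesis unfolding cat_equiv_def
    apply (rule conjI[OF F])
    apply (rule exI[of _ ?H], rule exI[of _ "\<lambda>x. undefined"], rule exI[of _ "\<lambda>x. undefined"])
    using True Y by (simp add: is_functor_def nat_iso_def chaotic_def)
next
  case False
  then obtain x0 where x0: "x0 \<in> X" by blast
  have Fx: "\<And>x. x \<in> X \<Longrightarrow> fo F x \<in> Y" using F by (simp add: is_functor_def chaotic_def)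
  have Fm: "fm F f = (fo F (fst f), fo F (snd f))" if f: "f \<in> X \<times> X" for f
  proof -
    have "\<forall>f\<in>Arr (chaotic X). fm F f \<in> Arr (chaotic Y) \<and> Dom (chaotic Y) (fm F f) = fo F (Dom (chaotic X) f) \<and> Cod (chaotic Y) (fm F f) = fo F (Cod (chaotic X) f)"
      using F unfolding is_functor_def by blast
    then have "fst (fm F f) = fo F (fst f) \<and> snd (fm F f) = fo F (snd f)"
      using f by (cases f) (simp add: chaotic_def)
    then show ?thesis by (cases "fm F f") simp
  qed
  let ?H = "chaotic_fun (\<lambda>y. x0) :: ('b, 'b\<times>'b, 'a, 'a\<times>'a) cfunctor"
  have H: "is_functor (chaotic Y) (chaotic X) ?H"
    using x0 by (auto simp: is_functor_def chaotic_def chaotic_fun_def)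
  have eta: "nat_iso (chaotic X) (chaotic X) id_functor (comp_functor ?H F) (\<lambda>x. (x, x0))"
    unfolding nat_iso_def
  proof (rule conjI; intro ballI)
    fix x assume "x \<in> Obj (chaotic X)"
    then show "iso_arr (chaotic X) (x, x0) \<and> Dom (chaotic X) (x, x0) = fo id_functor x \<and>
        Cod (chaotic X) (x, x0) = fo (comp_functor ?H F) x"
      using x0 unfolding iso_arr_def chaotic_def id_functor_def comp_functor_def chaotic_fun_def
      by (simp add: bexI[of _ "(x0, x)"])
  next
    fix f assume "f \<in> Arr (chaotic X)"
    then show "Cmp (chaotic X) (Cod (chaotic X) f, x0) (fm id_functor f) =
          Cmp (chaotic X) (fm (comp_functor ?H F) f) (Dom (chaotic X) f, x0)"
      unfolding chaotic_def id_functor_def comp_functor_def chaotic_fun_def by simp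
  qed
  have eps: "nat_iso (chaotic Y) (chaotic Y) (comp_functor F ?H) id_functor (\<lambda>y. (fo F x0, y))"
    unfolding nat_iso_def
  proof (rule conjI; intro ballI)
    fix y assume y: "y \<in> Obj (chaotic Y)"
    have "fo F x0 \<in> Y" using Fx x0 by blast
    with y show "iso_arr (chaotic Y) (fo F x0, y) \<and> Dom (chaotic Y) (fo F x0, y) = fo (comp_functor F ?H) y \<and>
        Cod (chaotic Y) (fo F x0, y) = fo id_functor y"
      unfolding iso_arr_def chaotic_def id_functor_def comp_functor_def chaotic_fun_def
      by (simp add: bexI[of _ "(y, fo F x0)"])
  next
    fix f assume "f \<in> Arr (chaotic Y)"
    then have "(x0, x0) \<in> X \<times> X" using x0 by simp
    then have "fm F (x0, x0) = (fo F x0, fo F x0)" using Fm[of "(x0, x0)"] by simp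
    then show "Cmp (chaotic Y) (fo F x0, Cod (chaotic Y) f) (fm (comp_functor F ?H) f) =
          Cmp (chaotic Y) (fm id_functor f) (fo F x0, Dom (chaotic Y) f)"
      unfolding chaotic_def id_functor_def comp_functor_def chaotic_fun_def by (cases f) simp
  qed
  show ?thesis unfolding cat_equiv_def using F H eta eps by blast
qed

fun comb :: "nat \<Rightarrow> tr" where
  "comb 0 = Nul" | "comb (Suc n) = Bin (comb n) (Lf (Suc n))"

lemma leaves_comb: "leaves (comb n) = [1..<Suc n]"
  by (induction n) auto

lemma comb_in: "comb n \<in> free_ar n"
  unfolding free_ar_def by (auto simp: leaves_comb)

lemma part1: "\<exists>F F'. operad_map G SM_empty eps_P F \<and> operad_map G SM_empty eps_P F' \<and>
             (\<exists>x\<in>Obj (Lev SM_empty 2). fo (F 2) x \<noteq> fo (F' 2) x)"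
proof -
  have m1: "operad_map G SM_empty eps_P (\<lambda>n. chaotic_fun leaves)"
    by (rule opmap_generic) (auto simp: free_ar_def perm_ar_def leaves_relabel leaves_gamma)
  have m2: "operad_map G SM_empty eps_P (\<lambda>n. chaotic_fun (\<lambda>t. rev (leaves t)))"
    by (rule opmap_generic) (auto simp: free_ar_def perm_ar_def leaves_relabel rleaves_gamma rev_map)
  have "Bin (Lf 1) (Lf 2) \<in> Obj (Lev SM_empty 2)"
  proof -
    have "{1..2} = {1, 2::nat}" by auto
    then show ?thesis by (simp add: Lev_SM chaotic_def free_ar_def)
  qed
  then show ?thesis
    using m1 m2 by (intro exI[of _ "\<lambda>n. chaotic_fun leaves"] exI[of _ "\<lambda>n. chaotic_fun (\<lambda>t. rev (leaves t))"])
      (auto simp: chaotic_fun_def intro!: bexI[of _ "Bin (Lf 1) (Lf 2)"])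
qed

lemma part2:
  fixes G :: "('g, 'b) monoid_scheme"
  assumes om: "operad_map G SM_empty eps_P F" and sg: "subgroup \<Lambda> (G \<times>\<times> sym_group n)"
  shows "cat_equiv (fixed_subcat (Lev SM_empty n) (Act SM_empty n) \<Lambda>)
                         (fixed_subcat (Lev eps_P n) (Act eps_P n) \<Lambda>) (F n)"
proof -
  define a where "a = (\<lambda>l. case l of (g::'g, \<sigma>::nat\<Rightarrow>nat) \<Rightarrow> relabel \<sigma>)"
  define b where "b = (\<lambda>l. case l of (g::'g, \<sigma>::nat\<Rightarrow>nat) \<Rightarrow> map \<sigma>)"
  define X where "X = {x\<in>free_ar n. \<forall>l\<in>\<Lambda>. a l x = x}"
  define Y where "Y = {x\<in>perm_ar n. \<forall>l\<in>\<Lambda>. b l x = x}"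
  have sub: "\<Lambda> \<subseteq> carrier (G \<times>\<times> sym_group n)" using sg by (rule subgroup.subset)
  have fun0: "is_functor (chaotic (free_ar n)) (chaotic (perm_ar n)) (F n)"
    using om by (simp add: operad_map_def Lev_SM Lev_P)
  have eqo: "\<And>l x. l \<in> \<Lambda> \<Longrightarrow> x \<in> free_ar n \<Longrightarrow> fo (F n) (a l x) = b l (fo (F n) x)"
    using om sub unfolding operad_map_def Lev_SM Lev_P Act_SM Act_P a_def b_def
    by (auto simp: chaotic_def chaotic_fun_def)
  have eqm: "\<And>l f. l \<in> \<Lambda> \<Longrightarrow> f \<in> free_ar n \<times> free_ar n \<Longrightarrow>
       fm (F n) (map_prod (a l) (a l) f) = map_prod (b l) (b l) (fm (F n) f)"
    using om sub unfolding operad_map_def Lev_SM Lev_P Act_SM Act_P a_def b_def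
    by (auto simp: chaotic_def chaotic_fun_def)
  have fmF: "fm (F n) f = (fo (F n) (fst f), fo (F n) (snd f))" if f: "f \<in> free_ar n \<times> free_ar n" for f
  proof -
    have "\<forall>f\<in>Arr (chaotic (free_ar n)). fm (F n) f \<in> Arr (chaotic (perm_ar n)) \<and> Dom (chaotic (perm_ar n)) (fm (F n) f) = fo (F n) (Dom (chaotic (free_ar n)) f) \<and> Cod (chaotic (perm_ar n)) (fm (F n) f) = fo (F n) (Cod (chaotic (free_ar n)) f)"
      using fun0 unfolding is_functor_def by blast
    then have "fst (fm (F n) f) = fo (F n) (fst f) \<and> snd (fm (F n) f) = fo (F n) (snd f)"
      using f by (cases f) (simp add: chaotic_def)
    then show ?thesis by (cases "fm (F n) f") simp
  qed
  have objF: "fo (F n) x \<in> Y" if x: "x \<in> X" for x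
  proof -
    have xf: "x \<in> free_ar n" and xa: "\<forall>l\<in>\<Lambda>. a l x = x" using x by (auto simp: X_def)
    have "\<forall>x\<in>Obj (chaotic (free_ar n)). fo (F n) x \<in> Obj (chaotic (perm_ar n))"
      using fun0 unfolding is_functor_def by blast
    then have p: "fo (F n) x \<in> perm_ar n" using xf by (simp add: chaotic_def)
    have "\<forall>l\<in>\<Lambda>. b l (fo (F n) x) = fo (F n) x"
    proof
      fix l assume l: "l \<in> \<Lambda>"
      have "b l (fo (F n) x) = fo (F n) (a l x)" using eqo[OF l xf] by simp
      also have "\<dots> = fo (F n) x" using xa l by simp
      finally show "b l (fo (F n) x) = fo (F n) x" .
    qed
    then show ?thesis using p by (simp add: Y_def)
  qed
  have XA: "X \<subseteq> free_ar n" by (auto simp: X_def)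
  have h1: "\<forall>x\<in>Obj (chaotic X). fo (F n) x \<in> Obj (chaotic Y)"
    using objF by (simp add: chaotic_def)
  have h2: "\<forall>f\<in>Arr (chaotic X). fm (F n) f \<in> Arr (chaotic Y) \<and>
         Dom (chaotic Y) (fm (F n) f) = fo (F n) (Dom (chaotic X) f) \<and>
         Cod (chaotic Y) (fm (F n) f) = fo (F n) (Cod (chaotic X) f)"
  proof
    fix f assume f: "f \<in> Arr (chaotic X)"
    then have fX: "f \<in> X \<times> X" by (simp add: chaotic_def)
    then have fA: "f \<in> free_ar n \<times> free_ar n" using XA by blast
    have "fo (F n) (fst f) \<in> Y" "fo (F n) (snd f) \<in> Y" using fX objF by auto
    then show "fm (F n) f \<in> Arr (chaotic Y) \<and>
         Dom (chaotic Y) (fm (F n) f) = fo (F n) (Dom (chaotic X) f) \<and>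
         Cod (chaotic Y) (fm (F n) f) = fo (F n) (Cod (chaotic X) f)"
      using fmF[OF fA] by (simp add: chaotic_def)
  qed
  have h3: "\<forall>x\<in>Obj (chaotic X). fm (F n) (Idm (chaotic X) x) = Idm (chaotic Y) (fo (F n) x)"
  proof
    fix x assume "x \<in> Obj (chaotic X)"
    then have "x \<in> Obj (chaotic (free_ar n))" using XA by (auto simp: chaotic_def)
    moreover have "\<forall>x\<in>Obj (chaotic (free_ar n)). fm (F n) (Idm (chaotic (free_ar n)) x) = Idm (chaotic (perm_ar n)) (fo (F n) x)"
      using fun0 unfolding is_functor_def by blast
    ultimately show "fm (F n) (Idm (chaotic X) x) = Idm (chaotic Y) (fo (F n) x)"
      by (simp add: chaotic_def)
  qed
  have h4: "\<forall>f\<in>Arr (chaotic X). \<forall>g\<in>Arr (chaotic X). Dom (chaotic X) g = Cod (chaotic X) f \<longrightarrow>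
      fm (F n) (Cmp (chaotic X) g f) = Cmp (chaotic Y) (fm (F n) g) (fm (F n) f)"
  proof (intro ballI impI)
    fix f g assume fg: "f \<in> Arr (chaotic X)" "g \<in> Arr (chaotic X)" "Dom (chaotic X) g = Cod (chaotic X) f"
    then have "f \<in> free_ar n \<times> free_ar n" "g \<in> free_ar n \<times> free_ar n" "fst g = snd f"
      using XA by (auto simp: chaotic_def)
    then have "(fst f, snd g) \<in> free_ar n \<times> free_ar n" by auto
    then show "fm (F n) (Cmp (chaotic X) g f) = Cmp (chaotic Y) (fm (F n) g) (fm (F n) f)"
      using fmF \<open>f \<in> free_ar n \<times> free_ar n\<close> \<open>g \<in> free_ar n \<times> free_ar n\<close>
      by (simp add: chaotic_def)
  qed
  have fun1: "is_functor (chaotic X) (chaotic Y) (F n)"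
    unfolding is_functor_def using h1 h2 h3 h4 by blast
  have ne: "X \<noteq> {}" if "Y \<noteq> {}"
  proof -
    from that obtain w where w: "w \<in> perm_ar n" "\<forall>l\<in>\<Lambda>. b l w = w" unfolding Y_def by blast
    have "\<forall>l\<in>\<Lambda>. a l (comb n) = comb n"
    proof
      fix l assume l: "l \<in> \<Lambda>"
      obtain g \<sigma> where l': "l = (g, \<sigma>)" by (cases l)
      have perm: "\<sigma> permutes {1..n}" using l l' sub by (auto simp: sym_group_def)
      have mw: "map \<sigma> w = w" using bspec[OF w(2) l] l' by (simp add: b_def)
      have "\<sigma> i = i" for i
      proof (cases "i \<in> {1..n}")
        case True
        then have "i \<in> set w" using w(1) by (simp add: perm_ar_def)
        then obtain j where j: "j < length w" "w ! j = i" by (auto simp: in_set_conv_nth)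
        have "map \<sigma> w ! j = w ! j" using mw by simp
        then show ?thesis using j by simp
      next
        case False then show ?thesis using perm by (simp add: permutes_not_in)
      qed
      then have "\<sigma> = id" by auto
      then show "a l (comb n) = comb n" using l' by (simp add: a_def relabel_id)
    qed
    then have "comb n \<in> X" using comb_in by (simp add: X_def)
    then show ?thesis by blast
  qed
  have "cat_equiv (chaotic X) (chaotic Y) (F n)" by (rule chaotic_equiv[OF fun1 ne])
  then show ?thesis unfolding Lev_SM Lev_P Act_SM Act_P fixed_chaotic X_def Y_def a_def b_def .
qed

theorem proposition4p15:
  fixes G :: "('g, 'b) monoid_scheme"
  assumes "group G" and "finite (carrier G)"
  shows "(\<exists>F F'. operad_map G SM_empty eps_P F \<and> operad_map G SM_empty eps_P F' \<and>
             (\<exists>x\<in>Obj (Lev SM_empty 2). fo (F 2) x \<noteq> fo (F' 2) x))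
       \<and> (\<forall>F. operad_map G SM_empty eps_P F \<longrightarrow>
            (\<forall>n \<Lambda>. subgroup \<Lambda> (G \<times>\<times> sym_group n) \<longrightarrow>
               cat_equiv (fixed_subcat (Lev SM_empty n) (Act SM_empty n) \<Lambda>)
                         (fixed_subcat (Lev eps_P n) (Act eps_P n) \<Lambda>) (F n)))"
  using part1 part2 by blast

end
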